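(* Let $d\ge 2$ and $n_1,\ldots,n_d\ge 1$ be integers, and let $\mathcal{T}\in\mathbb{R}^{n_1\times\cdots\times n_d}$, $\mathcal{T}\neq 0$. Let $[d]=\bigcup_{j=1}^m\alpha_j$ be the symmetric decomposition for $\mathcal{T}$. Then there exists a best rank one approximation $\mathcal{A}$ of $\mathcal{T}$ such that $\mathcal{A}$ is symmetric with respect to each $\alpha_j$, $j\in[m]$.
   Context: $[d]=\{1,\ldots,d\}$. $\mathbb{R}^{n_1\times\cdots\times n_d}=\otimes_{j=1}^d\mathbb{R}^{n_j}$ is the space of real $d$-tensors $\mathcal{T}=[t_{i_1,\ldots,i_d}]$, with inner product $\langle\mathcal{S},\mathcal{T}\rangle=\sum s_{i_1,\ldots,i_d}t_{i_1,\ldots,i_d}$ and norm $\|\mathcal{T}\|=\sqrt{\langle\mathcal{T},\mathcal{T}\rangle}$. For $\mathbf{x}_j\in\mathbb{R}^{n_j}$, $\otimes_{j=1}^d\mathbf{x}_j$ is the tensor with entries $\prod_{j=1}^d x_{i_j,j}$. $\mathrm{S}^{n-1}$ is the unit sphere in $\mathbb{R}^n$ (Euclidean norm). A best rank one approximation of $\mathcal{T}$ is a tensor $a\otimes_{j=1}^d\mathbf{u}_j$ with $a\in\mathbb{R}$, $\mathbf{u}_j\in\mathrm{S}^{n_j-1}$, attaining $\min_{s\in\mathbb{R},\,\mathbf{x}_j\in\mathrm{S}^{n_j-1}}\|\mathcal{T}-s\otimes_{j=1}^d\mathbf{x}_j\|$. For $\alpha\subseteq[d]$ with $|\alpha|\ge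 2$, a tensor is symmetric with respect to $\alpha$ if $n_p=n_q$ for all $p,q\in\alpha$ and its entry $t_{i_1,\ldots,i_d}$ is unchanged when any two indices $i_p,i_q$ with $p,q\in\alpha$ are interchanged; every tensor is by convention symmetric with respect to each singleton $\{i\}$. The symmetric decomposition of $\mathcal{T}$ is the unique partition $[d]=\bigcup_{j=1}^m\alpha_j$ into nonempty disjoint sets such that $\mathcal{T}$ is symmetric with respect to each $\alpha_j$, and for $j\neq k$, $p\in\alpha_j$, $q\in\alpha_k$, $\mathcal{T}$ is not symmetric with respect to $\{p,q\}$. *)

theory Defs
  imports "HOL-Analysis.Analysis" "HOL-Library.Disjoint_Sets"
begin

text \<open>A real d-tensor of format n_0 x ... x n_(d-1) is a function on index tuples
  (i_0,...,i_(d-1)), represented as functions nat => nat, with 0 <= i_j < n_j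
  (0-based indices); only values on the index set matter.\<close>

type_synonym tensor = "(nat \<Rightarrow> nat) \<Rightarrow> real"

definition idx :: "nat \<Rightarrow> (nat \<Rightarrow> nat) \<Rightarrow> (nat \<Rightarrow> nat) set" where
  "idx d n = PiE {..<d} (\<lambda>j. {..<n j})"

definition tinner :: "nat \<Rightarrow> (nat \<Rightarrow> nat) \<Rightarrow> tensor \<Rightarrow> tensor \<Rightarrow> real" where
  "tinner d n S T = (\<Sum>i\<in>idx d n. S i * T i)"

definition tnorm :: "nat \<Rightarrow> (nat \<Rightarrow> nat) \<Rightarrow> tensor \<Rightarrow> real" where
  "tnorm d n T = sqrt (tinner d n T T)"

definition rank_one :: "nat \<Rightarrow> real \<Rightarrow> (nat \<Rightarrow> nat \<Rightarrow> real) \<Rightarrow> tensor" where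
  "rank_one d s x = (\<lambda>i. s * (\<Prod>j<d. x j (i j)))"

definition on_sphere :: "nat \<Rightarrow> (nat \<Rightarrow> real) \<Rightarrow> bool" where
  "on_sphere m v \<longleftrightarrow> (\<Sum>k<m. (v k)\<^sup>2) = 1"

definition best_rank_one_approx :: "nat \<Rightarrow> (nat \<Rightarrow> nat) \<Rightarrow> tensor \<Rightarrow> tensor \<Rightarrow> bool" where
  "best_rank_one_approx d n T A \<longleftrightarrow>
     (\<exists>a u. (\<forall>j<d. on_sphere (n j) (u j)) \<and> A = rank_one d a u \<and>
        (\<forall>s x. (\<forall>j<d. on_sphere (n j) (x j)) \<longrightarrow>
            tnorm d n (\<lambda>i. T i - A i) \<le> tnorm d n (\<lambda>i. T i - rank_one d s x i)))"

definition sym_wrt :: "nat \<Rightarrow> (nat \<Rightarrow> nat) \<Rightarrow> tensor \<Rightarrow> nat set \<Rightarrow> bool" where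
  "sym_wrt d n T \<alpha> \<longleftrightarrow>
     (\<forall>p\<in>\<alpha>. \<forall>q\<in>\<alpha>. n p = n q) \<and>
     (\<forall>i\<in>idx d n. \<forall>p\<in>\<alpha>. \<forall>q\<in>\<alpha>. T (i(p := i q, q := i p)) = T i)"

definition sym_decomposition :: "nat \<Rightarrow> (nat \<Rightarrow> nat) \<Rightarrow> tensor \<Rightarrow> nat set set \<Rightarrow> bool" where
  "sym_decomposition d n T P \<longleftrightarrow>
     partition_on {..<d} P \<and>
     (\<forall>\<alpha>\<in>P. sym_wrt d n T \<alpha>) \<and>
     (\<forall>\<alpha>\<in>P. \<forall>\<beta>\<in>P. \<alpha> \<noteq> \<beta> \<longrightarrow> (\<forall>p\<in>\<alpha>. \<forall>q\<in>\<beta>. \<not> sym_wrt d n T {p, q}))"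

end

theory Submission
  imports Defs
begin



definition Kset :: "nat \<Rightarrow> (nat\<Rightarrow>nat) \<Rightarrow> (nat \<Rightarrow> nat \<Rightarrow> real) set" where
 "Kset d n = {x. (\<forall>j<d. on_sphere (n j) (x j)) \<and> (\<forall>j k. (d \<le> j \<or> n j \<le> k) \<longrightarrow> x j k = 0)}"

definition Fval :: "nat \<Rightarrow> (nat\<Rightarrow>nat) \<Rightarrow> tensor \<Rightarrow> (nat\<Rightarrow>nat\<Rightarrow>real) \<Rightarrow> real" where
 "Fval d n T x = (\<Sum>i\<in>idx d n. T i * (\<Prod>j<d. x j (i j)))"

lemma compact_PiE_UNIV:
  fixes S :: "'i \<Rightarrow> 'b::topological_space set"
  assumes "\<And>i. compact (S i)"
  shows "compact (PiE UNIV S)"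
proof -
  have "compactin (product_topology (\<lambda>i. euclidean) UNIV) (PiE UNIV S)"
    using assms by (simp add: compactin_PiE)
  then show ?thesis by (simp add: euclidean_product_topology)
qed

lemma cont_coord: "continuous_on S (\<lambda>x::nat\<Rightarrow>nat\<Rightarrow>real. x j k)"
proof -
  have "continuous_on UNIV (\<lambda>x::nat\<Rightarrow>nat\<Rightarrow>real. x j)" by simp
  then have "continuous_on UNIV (\<lambda>x::nat\<Rightarrow>nat\<Rightarrow>real. x j k)"
    by (rule continuous_on_product_then_coordinatewise)
  then show ?thesis using continuous_on_subset by blast
qed

lemma cont_F: "continuous_on S (Fval d n T)"
  unfolding Fval_def
  by (intro continuous_intros cont_coord)

lemma closed_K: "closed {x::nat\<Rightarrow>nat\<Rightarrow>real. (\<forall>j<d. on_sphere (n j) (x j)) \<and> (\<forall>j k. (d \<le> j \<or> n j \<le> k) \<longrightarrow> x j k = 0)}"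
  unfolding on_sphere_def
  apply (intro closed_Collect_conj closed_Collect_all closed_Collect_imp closed_Collect_eq)
  apply (auto intro!: continuous_intros cont_coord)
  done

lemma compact_K: "compact (Kset d n)"
proof -
  have sub: "Kset d n \<subseteq> PiE UNIV (\<lambda>j. PiE UNIV (\<lambda>k. {-1..1::real}))"
  proof
    fix x :: "nat\<Rightarrow>nat\<Rightarrow>real"
    assume "x \<in> Kset d n"
    then have s: "\<forall>j<d. on_sphere (n j) (x j)" and z: "\<forall>j k. (d \<le> j \<or> n j \<le> k) \<longrightarrow> x j k = 0"
      by (auto simp: Kset_def)
    have b: "\<bar>x j k\<bar> \<le> 1" for j k
    proof (cases "j < d \<and> k < n j")
      case True
      then have "(x j k)^2 \<le> (\<Sum>k<n j. (x j k)^2)"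
        by (intro member_le_sum) auto
      then have "(x j k)^2 \<le> 1" using s True by (simp add: on_sphere_def)
      then show ?thesis using abs_square_le_1 by blast
    next
      case False then show ?thesis using z by auto
    qed
    then show "x \<in> PiE UNIV (\<lambda>j. PiE UNIV (\<lambda>k. {-1..1}))" by (auto simp: abs_le_iff)
  qed
  have "compact (PiE UNIV (\<lambda>j. PiE UNIV (\<lambda>k. {-1..1::real})))"
    by (intro compact_PiE_UNIV) auto
  moreover have "closed (Kset d n)" using closed_K unfolding Kset_def .
  ultimately have "compact (PiE UNIV (\<lambda>j. PiE UNIV (\<lambda>k. {-1..1::real})) \<inter> Kset d n)" by auto
  moreover have "PiE UNIV (\<lambda>j. PiE UNIV (\<lambda>k. {-1..1::real})) \<inter> Kset d n = Kset d n" using sub by blast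
  ultimately show ?thesis by simp
qed

lemma K_nonempty: assumes "\<forall>j<d. n j \<ge> 1" shows "Kset d n \<noteq> {}"
proof -
  let ?x = "\<lambda>j k. if j < d \<and> k = 0 then 1::real else 0"
  have "?x \<in> Kset d n"
  proof -
    have "(\<Sum>k<n j. (?x j k)^2) = 1" if "j < d" for j
    proof -
      have "(\<Sum>k<n j. (?x j k)^2) = (\<Sum>k<n j. if k = 0 then 1 else 0)"
        using that by (intro sum.cong) auto
      also have "\<dots> = 1" using assms that by (simp add: sum.delta Suc_le_eq)
      finally show ?thesis .
    qed
    then show ?thesis using assms by (auto simp: Kset_def on_sphere_def Suc_le_eq)
  qed
  then show ?thesis by blast
qed




definition ipr :: "nat \<Rightarrow> (nat \<Rightarrow> real) \<Rightarrow> (nat \<Rightarrow> real) \<Rightarrow> real" where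
  "ipr m u v = (\<Sum>k<m. u k * v k)"

definition swp :: "nat \<Rightarrow> nat \<Rightarrow> (nat \<Rightarrow> nat) \<Rightarrow> (nat \<Rightarrow> nat)" where
  "swp p q i = i(p := i q, q := i p)"

lemma prod_split2:
  fixes g :: "nat \<Rightarrow> real"
  assumes "p < d" "q < d" "p \<noteq> q"
  shows "(\<Prod>j<d. g j) = g p * g q * (\<Prod>j\<in>{..<d}-{p,q}. g j)"
proof -
  have "(\<Prod>j<d. g j) = g p * (\<Prod>j\<in>{..<d}-{p}. g j)"
    using assms by (simp add: prod.remove)
  also have "(\<Prod>j\<in>{..<d}-{p}. g j) = g q * (\<Prod>j\<in>{..<d}-{p}-{q}. g j)"
    using assms by (intro prod.remove) auto
  also have "{..<d}-{p}-{q} = {..<d}-{p,q}" by auto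
  finally show ?thesis by simp
qed

definition cf :: "nat \<Rightarrow> nat \<Rightarrow> nat \<Rightarrow> (nat\<Rightarrow>nat\<Rightarrow>real) \<Rightarrow> (nat \<Rightarrow> nat) \<Rightarrow> real" where
  "cf d p q x i = (\<Prod>j\<in>{..<d}-{p,q}. x j (i j))"

definition Bf :: "nat \<Rightarrow> (nat\<Rightarrow>nat) \<Rightarrow> tensor \<Rightarrow> nat \<Rightarrow> nat \<Rightarrow> (nat\<Rightarrow>nat\<Rightarrow>real) \<Rightarrow> (nat \<Rightarrow> real) \<Rightarrow> (nat \<Rightarrow> real) \<Rightarrow> real" where
  "Bf d n T p q x u v = (\<Sum>i\<in>idx d n. T i * cf d p q x i * u (i p) * v (i q))"

lemma F_upd:
  assumes "p < d" "q < d" "p \<noteq> q"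
  shows "Fval d n T (x(p:=u, q:=v)) = Bf d n T p q x u v"
proof -
  have "(\<Prod>j<d. (x(p:=u, q:=v)) j (i j)) = u (i p) * v (i q) * cf d p q x i" for i
    using prod_split2[OF assms, of "\<lambda>j. (x(p:=u, q:=v)) j (i j)"] assms
    by (simp add: cf_def)
  then show ?thesis unfolding Fval_def Bf_def by (intro sum.cong) (auto simp: algebra_simps)
qed

lemma F_self:
  assumes "p < d" "q < d" "p \<noteq> q"
  shows "Fval d n T x = Bf d n T p q x (x p) (x q)"
proof -
  have "x = x(p:=x p, q:= x q)" by simp
  then show ?thesis using F_upd[OF assms, of n T x "x p" "x q"] by metis
qed

lemma Bf_sym:
  assumes "p < d" "q < d" "p \<noteq> q" "n p = n q"
    and symT: "\<forall>i\<in>idx d n. T (swp p q i) = T i"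
  shows "Bf d n T p q x u v = Bf d n T p q x v u"
proof -
  have sw_idx: "swp p q i \<in> idx d n" if "i \<in> idx d n" for i
  proof -
    have i1: "\<forall>j<d. i j < n j" and i2: "\<forall>j. j \<ge> d \<longrightarrow> i j = undefined"
      using that unfolding idx_def PiE_iff extensional_def by auto
    have "\<forall>j<d. swp p q i j < n j" using i1 assms unfolding swp_def by auto
    moreover have "\<forall>j. j \<ge> d \<longrightarrow> swp p q i j = undefined" using i2 assms unfolding swp_def by auto
    ultimately show ?thesis unfolding idx_def PiE_iff extensional_def by auto
  qed
  have sw_sw: "swp p q (swp p q i) = i" for i
    unfolding swp_def by auto
  have cf_sw: "cf d p q x (swp p q i) = cf d p q x i" for i
    unfolding cf_def swp_def by (intro prod.cong) auto
  show ?thesis unfolding Bf_def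
    apply (rule sum.reindex_bij_witness[of _ "swp p q" "swp p q"])
    using sw_idx sw_sw cf_sw symT assms by (auto simp: swp_def algebra_simps)
qed

lemma Bf_scale:
  "Bf d n T p q x (\<lambda>k. c * u k) (\<lambda>k. e * v k) = c * e * Bf d n T p q x u v"
  unfolding Bf_def by (simp add: sum_distrib_left algebra_simps)

lemma Bf_polar:
  "Bf d n T p q x (\<lambda>k. u k + v k) (\<lambda>k. u k + v k) - Bf d n T p q x (\<lambda>k. u k - v k) (\<lambda>k. u k - v k)
   = 2 * Bf d n T p q x u v + 2 * Bf d n T p q x v u"
  unfolding Bf_def by (simp add: sum_subtractf[symmetric] sum_distrib_left sum.distrib[symmetric] algebra_simps)

lemma Bf_zero: "Bf d n T p q x (\<lambda>k. 0) (\<lambda>k. 0) = 0"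
  unfolding Bf_def by simp




lemma ipr_sq: "ipr m u u = (\<Sum>k<m. (u k)^2)"
  unfolding ipr_def by (simp add: power2_eq_square)

lemma ipr_nonneg: "ipr m u u \<ge> 0"
  unfolding ipr_sq by (intro sum_nonneg) auto

lemma K_upd:
  assumes "x \<in> Kset d n" "p < d" "q < d" "p \<noteq> q" "n p = n q"
    and "\<forall>k. n p \<le> k \<longrightarrow> u k = 0" "\<forall>k. n p \<le> k \<longrightarrow> v k = 0"
    and "ipr (n p) u u = 1" "ipr (n p) v v = 1"
  shows "x(p:=u, q:=v) \<in> Kset d n"
  using assms unfolding Kset_def on_sphere_def ipr_sq by auto

lemma ipr_zero_imp:
  assumes "ipr m u u = 0" "k < m" shows "u k = 0"
proof -
  have "\<forall>k\<in>{..<m}. (u k)^2 = 0"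
    using assms(1) unfolding ipr_sq by (subst sum_nonneg_eq_0_iff[symmetric]) auto
  then show ?thesis using assms(2) by auto
qed

lemma Bf_bound:
  assumes xK: "x \<in> Kset d n" and pq: "p < d" "q < d" "p \<noteq> q" "n p = n q"
    and maxM: "\<forall>y\<in>Kset d n. \<bar>Fval d n T y\<bar> \<le> M"
    and uz: "\<forall>k. n p \<le> k \<longrightarrow> u k = 0"
  shows "\<bar>Bf d n T p q x u u\<bar> \<le> M * ipr (n p) u u"
proof (cases "ipr (n p) u u = 0")
  case True
  then have "u = (\<lambda>k. 0)" using uz ipr_zero_imp[of "n p" u] by (metis not_le)
  then show ?thesis using True Bf_zero by simp
next
  case False
  define t where "t = sqrt (ipr (n p) u u)"
  have tpos: "t > 0" using False ipr_nonneg[of "n p" u] unfolding t_def by auto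
  have t2: "t^2 = ipr (n p) u u" using ipr_nonneg[of "n p" u] unfolding t_def by simp
  define u' where "u' = (\<lambda>k. (1/t) * u k)"
  have "ipr (n p) u' u' = (1/t)^2 * ipr (n p) u u"
    unfolding u'_def ipr_def by (simp add: sum_distrib_left power2_eq_square algebra_simps)
  then have iu: "ipr (n p) u' u' = 1" using t2 tpos False by (simp add: field_simps)
  have uz': "\<forall>k. n p \<le> k \<longrightarrow> u' k = 0" using uz unfolding u'_def by auto
  have "x(p:=u', q:=u') \<in> Kset d n" using K_upd[OF xK pq uz' uz' iu iu] .
  then have "\<bar>Bf d n T p q x u' u'\<bar> \<le> M" using maxM F_upd[OF pq(1-3)] by metis
  moreover have "Bf d n T p q x u' u' = (1/t)^2 * Bf d n T p q x u u"
    unfolding u'_def Bf_scale by (simp add: power2_eq_square)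
  ultimately have "(1/t)^2 * \<bar>Bf d n T p q x u u\<bar> \<le> M"
    by (simp add: abs_mult)
  then have "\<bar>Bf d n T p q x u u\<bar> \<le> M * t^2" using tpos by (simp add: field_simps)
  then show ?thesis using t2 by simp
qed

lemma sq_expand:
  "(\<Sum>k<m. (c * u k + R k)^2) = c^2 * ipr m u u + 2 * c * ipr m u R + ipr m R R"
  unfolding ipr_def by (simp add: power2_eq_square sum.distrib sum_distrib_left algebra_simps)




lemma move:
  assumes xK: "x \<in> Kset d n" and pq: "p < d" "q < d" "p \<noteq> q" "n p = n q"
    and symT: "\<forall>i\<in>idx d n. T (swp p q i) = T i"
    and maxM: "\<forall>y\<in>Kset d n. \<bar>Fval d n T y\<bar> \<le> M"
    and xM: "\<bar>Fval d n T x\<bar> = M"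
    and neq: "x p \<noteq> x q"
  shows "\<exists>z. x(p:=z,q:=z) \<in> Kset d n \<and> \<bar>Fval d n T (x(p:=z,q:=z))\<bar> = M \<and>
        (\<Sum>k<n p. (x p k + x q k + R k)^2) < (\<Sum>k<n p. (2 * z k + R k)^2)"
proof -
  define N where "N = n p"
  define a where "a = x p"
  define b where "b = x q"
  define B where "B = Bf d n T p q x"
  have az: "\<forall>k. N \<le> k \<longrightarrow> a k = 0" using xK unfolding Kset_def a_def N_def by auto
  have bz: "\<forall>k. N \<le> k \<longrightarrow> b k = 0" using xK pq unfolding Kset_def b_def N_def by auto
  have ia: "ipr N a a = 1" using xK pq unfolding Kset_def a_def N_def on_sphere_def ipr_sq by auto
  have ib: "ipr N b b = 1" using xK pq unfolding Kset_def b_def N_def on_sphere_def ipr_sq by auto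
  define w where "w = (\<lambda>k. a k + b k)"
  define v where "v = (\<lambda>k. a k - b k)"
  have wz: "\<forall>k. N \<le> k \<longrightarrow> w k = 0" using az bz unfolding w_def by auto
  have vz: "\<forall>k. N \<le> k \<longrightarrow> v k = 0" using az bz unfolding v_def by auto
  have "ipr N w w + ipr N v v = 2 * ipr N a a + 2 * ipr N b b"
    unfolding ipr_def w_def v_def
    by (simp add: sum.distrib[symmetric] sum_distrib_left algebra_simps)
  then have wv: "ipr N w w + ipr N v v = 4" using ia ib by simp
  have vpos: "ipr N v v > 0"
  proof (rule ccontr)
    assume "\<not> ipr N v v > 0"
    then have "ipr N v v = 0" using ipr_nonneg[of N v] by auto
    then have "v k = 0" if "k < N" for k using ipr_zero_imp that by blast
    then have "a k = b k" for k using az bz unfolding v_def by (cases "k < N") auto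
    then have "a = b" by auto
    then show False using neq unfolding a_def b_def by simp
  qed
  define \<epsilon> where "\<epsilon> = (if Fval d n T x \<ge> 0 then 1 else -1::real)"
  have epsabs: "\<And>y. \<bar>\<epsilon> * y\<bar> = \<bar>y\<bar>" unfolding \<epsilon>_def by auto
  have epsle: "\<And>y. \<epsilon> * y \<le> \<bar>y\<bar>" unfolding \<epsilon>_def by auto
  have eps: "\<epsilon> * B a b = M" using F_self[OF pq(1-3), of n T x] xM
    unfolding \<epsilon>_def B_def a_def b_def by auto
  have M0: "M \<ge> 0" using xM by auto
  have Bsym: "B b a = B a b" unfolding B_def using Bf_sym[OF pq symT] by blast
  have polar: "B w w - B v v = 4 * B a b"
    using Bf_polar[of d n T p q x a b] Bsym unfolding B_def w_def v_def by simp
  have bw: "\<bar>B w w\<bar> \<le> M * ipr N w w"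
    using Bf_bound[OF xK pq maxM] wz unfolding B_def N_def by blast
  have bv: "\<bar>B v v\<bar> \<le> M * ipr N v v"
    using Bf_bound[OF xK pq maxM] vz unfolding B_def N_def by blast
  have e1: "\<epsilon> * B w w \<le> M * ipr N w w" using epsle[of "B w w"] bw by linarith
  have e2: "- (\<epsilon> * B v v) \<le> M * ipr N v v" using epsle[of "- B v v"] bv by simp
  have e3: "\<epsilon> * B w w - \<epsilon> * B v v = 4 * M" using polar eps
    by (metis mult.left_commute right_diff_distrib)
  have "M * ipr N w w + M * ipr N v v = 4 * M" using wv by (metis distrib_left mult.commute)
  then have ew: "\<epsilon> * B w w = M * ipr N w w" using e1 e2 e3 by linarith
  have abw: "\<bar>B w w\<bar> = M * ipr N w w" using ew epsabs[of "B w w"] M0 ipr_nonneg[of N w] by simp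
  show ?thesis
  proof (cases "ipr N w w = 0")
    case False
    define t where "t = sqrt (ipr N w w)"
    have tpos: "t > 0" using False ipr_nonneg[of N w] unfolding t_def by auto
    have t2: "t^2 = ipr N w w" using ipr_nonneg[of N w] unfolding t_def by simp
    have wlt: "ipr N w w < 4" using wv vpos by linarith
    have tle: "t \<le> 2" using t2 wlt tpos
      by (metis less_eq_real_def order_le_less_trans power2_le_imp_le real_sqrt_four real_sqrt_less_mono t_def zero_le_numeral)
    define \<sigma> where "\<sigma> = (if ipr N w R \<ge> 0 then 1 else -1::real)"
    have sig2: "\<sigma>^2 = 1" unfolding \<sigma>_def by auto
    have sigw: "\<sigma> * ipr N w R = \<bar>ipr N w R\<bar>" unfolding \<sigma>_def by auto
    define z where "z = (\<lambda>k. (\<sigma>/t) * w k)"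
    have zz: "\<forall>k. n p \<le> k \<longrightarrow> z k = 0" using wz unfolding z_def N_def by auto
    have "ipr N z z = (\<sigma>/t)^2 * ipr N w w"
      unfolding z_def ipr_def by (simp add: sum_distrib_left power2_eq_square algebra_simps)
    then have iz: "ipr (n p) z z = 1" using t2 tpos sig2 False unfolding N_def
      by (simp add: field_simps power_divide)
    have x'K: "x(p:=z,q:=z) \<in> Kset d n" using K_upd[OF xK pq zz zz iz iz] .
    have "Fval d n T (x(p:=z,q:=z)) = B z z" using F_upd[OF pq(1-3)] unfolding B_def by blast
    also have "\<dots> = (\<sigma>/t) * (\<sigma>/t) * B w w" unfolding z_def B_def Bf_scale by simp
    finally have "\<bar>Fval d n T (x(p:=z,q:=z))\<bar> = (\<sigma>/t)^2 * \<bar>B w w\<bar>"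
      by (simp add: abs_mult power2_eq_square)
    also have "\<dots> = M" using abw t2 sig2 tpos False by (simp add: field_simps power_divide)
    finally have FM: "\<bar>Fval d n T (x(p:=z,q:=z))\<bar> = M" .
    have lhs: "(\<Sum>k<n p. (x p k + x q k + R k)^2) = ipr N w w + 2 * ipr N w R + ipr N R R"
      using sq_expand[where m=N and c=1 and u=w and R=R] unfolding w_def a_def b_def N_def by simp
    have "(\<Sum>k<n p. (2 * z k + R k)^2) = (\<Sum>k<N. ((2*\<sigma>/t) * w k + R k)^2)"
      unfolding z_def N_def by (simp add: mult.assoc)
    also have "\<dots> = (2*\<sigma>/t)^2 * ipr N w w + 2 * (2*\<sigma>/t) * ipr N w R + ipr N R R"
      by (rule sq_expand)
    also have "(2*\<sigma>/t)^2 * ipr N w w = 4"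
      using t2 sig2 tpos False by (simp add: field_simps power_divide)
    also have "2 * (2*\<sigma>/t) * ipr N w R = 4 * \<bar>ipr N w R\<bar> / t"
      using sigw by (simp add: field_simps)
    finally have rhs: "(\<Sum>k<n p. (2 * z k + R k)^2) = 4 + 4 * \<bar>ipr N w R\<bar> / t + ipr N R R" .
    have "2 * ipr N w R \<le> 4 * \<bar>ipr N w R\<bar> / t"
    proof -
      have "2 * \<bar>ipr N w R\<bar> * t \<le> 4 * \<bar>ipr N w R\<bar>"
        using mult_right_mono[OF tle abs_ge_zero[of "ipr N w R"]] by simp
      then have "2 * \<bar>ipr N w R\<bar> \<le> 4 * \<bar>ipr N w R\<bar> / t" using tpos by (simp add: field_simps)
      then show ?thesis by linarith
    qed
    then have ineq: "(\<Sum>k<n p. (x p k + x q k + R k)^2) < (\<Sum>k<n p. (2 * z k + R k)^2)"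
      using lhs rhs wlt by linarith
    show ?thesis using x'K FM ineq by blast
  next
    case True
    have w0: "w k = 0" if "k < N" for k using ipr_zero_imp[OF True that] .
    have bneg: "b = (\<lambda>k. (-1) * a k)"
    proof
      fix k show "b k = (-1) * a k"
        using w0[of k] az bz unfolding w_def by (cases "k < N") auto
    qed
    have "B a b = - B a a" unfolding bneg B_def
      using Bf_scale[of d n T p q x 1 a "-1" a] by simp
    then have aba: "\<bar>B a a\<bar> = M" using eps epsabs[of "B a b"] M0 by simp
    define \<sigma> where "\<sigma> = (if ipr N a R \<ge> 0 then 1 else -1::real)"
    have sig2: "\<sigma>^2 = 1" unfolding \<sigma>_def by auto
    have siga: "\<sigma> * ipr N a R = \<bar>ipr N a R\<bar>" unfolding \<sigma>_def by auto
    define z where "z = (\<lambda>k. \<sigma> * a k)"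
    have zz: "\<forall>k. n p \<le> k \<longrightarrow> z k = 0" using az unfolding z_def N_def by auto
    have "ipr N z z = \<sigma>^2 * ipr N a a"
      unfolding z_def ipr_def by (simp add: sum_distrib_left power2_eq_square algebra_simps)
    then have iz: "ipr (n p) z z = 1" using ia sig2 unfolding N_def by simp
    have x'K: "x(p:=z,q:=z) \<in> Kset d n" using K_upd[OF xK pq zz zz iz iz] .
    have "Fval d n T (x(p:=z,q:=z)) = B z z" using F_upd[OF pq(1-3)] unfolding B_def by blast
    also have "\<dots> = \<sigma> * \<sigma> * B a a" unfolding z_def B_def Bf_scale by simp
    finally have FM: "\<bar>Fval d n T (x(p:=z,q:=z))\<bar> = M"
      using aba sig2 by (simp add: abs_mult power2_eq_square)
    have lhs: "(\<Sum>k<n p. (x p k + x q k + R k)^2) = ipr N R R"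
      unfolding ipr_sq N_def[symmetric]
      by (intro sum.cong) (auto simp: w0[unfolded w_def a_def b_def])
    have "(\<Sum>k<n p. (2 * z k + R k)^2) = (\<Sum>k<N. ((2*\<sigma>) * a k + R k)^2)"
      unfolding z_def N_def by (simp add: mult.assoc)
    also have "\<dots> = (2*\<sigma>)^2 * ipr N a a + 2 * (2*\<sigma>) * ipr N a R + ipr N R R"
      by (rule sq_expand)
    also have "\<dots> = 4 + 4 * \<bar>ipr N a R\<bar> + ipr N R R"
      using ia sig2 siga by (simp add: power_mult_distrib algebra_simps)
    finally have rhs: "(\<Sum>k<n p. (2 * z k + R k)^2) = 4 + 4 * \<bar>ipr N a R\<bar> + ipr N R R" .
    have ineq: "(\<Sum>k<n p. (x p k + x q k + R k)^2) < (\<Sum>k<n p. (2 * z k + R k)^2)"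
      using lhs rhs by simp
    show ?thesis using x'K FM ineq by blast
  qed
qed




lemma rank1_norm:
  assumes "\<forall>j<d. on_sphere (n j) (x j)"
  shows "(\<Sum>i\<in>idx d n. (\<Prod>j<d. x j (i j))^2) = 1"
proof -
  have "(\<Sum>i\<in>idx d n. (\<Prod>j<d. x j (i j))^2) = (\<Sum>i\<in>idx d n. (\<Prod>j<d. (x j (i j))^2))"
    by (simp add: prod_power_distrib)
  also have "\<dots> = (\<Prod>j<d. \<Sum>k<n j. (x j k)^2)"
    unfolding idx_def by (rule prod_sum_PiE[symmetric]) auto
  also have "\<dots> = 1" using assms unfolding on_sphere_def by simp
  finally show ?thesis .
qed

lemma tinner_expand:
  "tinner d n (\<lambda>i. T i - rank_one d s x i) (\<lambda>i. T i - rank_one d s x i)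
   = tinner d n T T - 2 * s * Fval d n T x + s^2 * (\<Sum>i\<in>idx d n. (\<Prod>j<d. x j (i j))^2)"
proof -
  have "\<And>i. (T i - rank_one d s x i) * (T i - rank_one d s x i) = T i * T i - 2 * s * (T i * (\<Prod>j<d. x j (i j))) + s^2 * (\<Prod>j<d. x j (i j))^2"
    unfolding rank_one_def by (simp add: power2_eq_square algebra_simps)
  then show ?thesis
    unfolding tinner_def Fval_def
    by (simp add: sum_subtractf sum.distrib sum_distrib_left)
qed

lemma trunc:
  assumes "\<forall>j<d. on_sphere (n j) (y j)"
  defines "yt \<equiv> (\<lambda>j k. if j < d \<and> k < n j then y j k else 0)"
  shows "yt \<in> Kset d n" "Fval d n T yt = Fval d n T y"
proof -
  have "on_sphere (n j) (yt j)" if "j < d" for j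
  proof -
    have "(\<Sum>k<n j. (yt j k)^2) = (\<Sum>k<n j. (y j k)^2)"
      by (rule sum.cong) (simp_all add: yt_def that)
    then show ?thesis using assms(1) that unfolding on_sphere_def by simp
  qed
  moreover have "\<forall>j k. (d \<le> j \<or> n j \<le> k) \<longrightarrow> yt j k = 0" unfolding yt_def by auto
  ultimately show "yt \<in> Kset d n" unfolding Kset_def by blast
  have "(\<Prod>j<d. yt j (i j)) = (\<Prod>j<d. y j (i j))" if "i \<in> idx d n" for i
  proof (rule prod.cong)
    fix j assume "j \<in> {..<d}"
    moreover have "\<forall>j<d. i j < n j" using that unfolding idx_def PiE_iff by auto
    ultimately show "yt j (i j) = y j (i j)" unfolding yt_def by auto
  qed simp
  then show "Fval d n T yt = Fval d n T y" unfolding Fval_def by (intro sum.cong) auto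
qed

lemma best:
  assumes x0K: "x0 \<in> Kset d n" and mx: "\<forall>y\<in>Kset d n. \<bar>Fval d n T y\<bar> \<le> \<bar>Fval d n T x0\<bar>"
  shows "best_rank_one_approx d n T (rank_one d (Fval d n T x0) x0)"
proof -
  define a where "a = Fval d n T x0"
  have u: "\<forall>j<d. on_sphere (n j) (x0 j)" using x0K unfolding Kset_def by auto
  have "tnorm d n (\<lambda>i. T i - rank_one d a x0 i) \<le> tnorm d n (\<lambda>i. T i - rank_one d s y i)"
    if y: "\<forall>j<d. on_sphere (n j) (y j)" for s y
  proof -
    define tt where "tt = tinner d n T T"
    define fy where "fy = Fval d n T y"
    have e1: "tinner d n (\<lambda>i. T i - rank_one d a x0 i) (\<lambda>i. T i - rank_one d a x0 i) = tt - 2 * a * a + a^2"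
      using tinner_expand[of d n T a x0] rank1_norm[OF u] unfolding tt_def a_def by simp
    have e2: "tinner d n (\<lambda>i. T i - rank_one d s y i) (\<lambda>i. T i - rank_one d s y i) = tt - 2 * s * fy + s^2"
      using tinner_expand[of d n T s y] rank1_norm[OF y] unfolding tt_def fy_def by simp
    have "\<exists>yt. yt \<in> Kset d n \<and> Fval d n T yt = Fval d n T y"
      using trunc[OF y] by blast
    then obtain yt where yt: "yt \<in> Kset d n" "Fval d n T yt = fy" unfolding fy_def by blast
    have "\<bar>fy\<bar> \<le> \<bar>a\<bar>" using mx yt unfolding a_def by force
    then have h1: "fy^2 \<le> a^2" by (simp add: abs_le_square_iff)
    have h2: "0 \<le> (s - fy)^2" by simp
    have h3: "(s - fy)^2 = s^2 - 2 * s * fy + fy^2" by (simp add: power2_eq_square algebra_simps)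
    have "tt - 2 * a * a + a^2 \<le> tt - 2 * s * fy + s^2"
    proof -
      have "2 * a * a = 2 * a^2" by (simp add: power2_eq_square)
      then show ?thesis using h1 h2 h3 by linarith
    qed
    then show ?thesis unfolding tnorm_def e1 e2 by (rule real_sqrt_le_mono)
  qed
  then show ?thesis unfolding best_rank_one_approx_def a_def using u by blast
qed

lemma sym_rank1:
  assumes "\<alpha> \<subseteq> {..<d}" "\<forall>p\<in>\<alpha>. \<forall>q\<in>\<alpha>. n p = n q" "\<forall>p\<in>\<alpha>. \<forall>q\<in>\<alpha>. x p = x q"
  shows "sym_wrt d n (rank_one d a x) \<alpha>"
proof -
  have main: "rank_one d a x (i(p := i q, q := i p)) = rank_one d a x i"
    if pq: "p \<in> \<alpha>" "q \<in> \<alpha>" for i p q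
  proof (cases "p = q")
    case True then show ?thesis by simp
  next
    case False
    have pd: "p < d" "q < d" using pq assms(1) by auto
    have xpq: "x p = x q" using assms(3) pq by blast
    define i' where "i' = i(p := i q, q := i p)"
    have i'p: "i' p = i q" unfolding i'_def using False by simp
    have i'q: "i' q = i p" unfolding i'_def by simp
    have i'o: "\<And>j. j \<in> {..<d}-{p,q} \<Longrightarrow> i' j = i j" unfolding i'_def by simp
    have r1: "(\<Prod>j<d. x j (i' j)) = x p (i' p) * x q (i' q) * (\<Prod>j\<in>{..<d}-{p,q}. x j (i' j))"
      by (rule prod_split2[OF pd False])
    have r2: "(\<Prod>j<d. x j (i j)) = x p (i p) * x q (i q) * (\<Prod>j\<in>{..<d}-{p,q}. x j (i j))"
      by (rule prod_split2[OF pd False])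
    have r3: "(\<Prod>j\<in>{..<d}-{p,q}. x j (i' j)) = (\<Prod>j\<in>{..<d}-{p,q}. x j (i j))"
      by (rule prod.cong) (simp_all add: i'o)
    have "(\<Prod>j<d. x j (i' j)) = (\<Prod>j<d. x j (i j))"
      unfolding r1 r2 r3 i'p i'q xpq by (simp add: mult.commute)
    then show ?thesis unfolding rank_one_def i'_def by simp
  qed
  show ?thesis unfolding sym_wrt_def using assms(2) main by blast
qed




lemma sum_split2:
  fixes g :: "nat \<Rightarrow> real"
  assumes "finite A" "p \<in> A" "q \<in> A" "p \<noteq> q"
  shows "(\<Sum>a\<in>A. g a) = g p + g q + (\<Sum>a\<in>A-{p,q}. g a)"
proof -
  have "(\<Sum>a\<in>A. g a) = g p + (\<Sum>a\<in>A-{p}. g a)" using assms by (simp add: sum.remove)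
  also have "(\<Sum>a\<in>A-{p}. g a) = g q + (\<Sum>a\<in>A-{p}-{q}. g a)"
    using assms by (intro sum.remove) auto
  also have "A-{p}-{q} = A-{p,q}" by auto
  finally show ?thesis by simp
qed

theorem theorem1p1:
  fixes d :: nat and n :: "nat \<Rightarrow> nat" and T :: tensor and P :: "nat set set"
  assumes "d \<ge> 2"
    and "\<forall>j<d. n j \<ge> 1"
    and "\<exists>i\<in>idx d n. T i \<noteq> 0"
    and "sym_decomposition d n T P"
  shows "\<exists>A. best_rank_one_approx d n T A \<and> (\<forall>\<alpha>\<in>P. sym_wrt d n A \<alpha>)"
proof -
  from assms(4) have part: "partition_on {..<d} P" and symP: "\<forall>\<alpha>\<in>P. sym_wrt d n T \<alpha>"
    unfolding sym_decomposition_def by auto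
  have Psub: "\<alpha> \<subseteq> {..<d}" if "\<alpha> \<in> P" for \<alpha> using part that unfolding partition_on_def by auto
  have finP: "finite P"
    by (rule finite_subset[of P "Pow {..<d}"]) (use Psub in auto)
  have disj: "\<alpha> \<inter> \<beta> = {}" if "\<alpha> \<in> P" "\<beta> \<in> P" "\<alpha> \<noteq> \<beta>" for \<alpha> \<beta>
    using part that unfolding partition_on_def disjoint_def by auto
  define K where "K = Kset d n"
  define F where "F = Fval d n T"
  have contF: "continuous_on U (\<lambda>x. \<bar>F x\<bar>)" for U
    unfolding F_def by (intro continuous_on_rabs cont_F)
  obtain x1 where x1: "x1 \<in> K" "\<forall>y\<in>K. \<bar>F y\<bar> \<le> \<bar>F x1\<bar>"
    using continuous_attains_sup[OF compact_K K_nonempty[OF assms(2)] contF] unfolding K_def by blast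
  define M where "M = \<bar>F x1\<bar>"
  define S where "S = K \<inter> {x. \<bar>F x\<bar> = M}"
  have "closed {x. \<bar>F x\<bar> = M}"
    by (rule closed_Collect_eq) (auto intro: contF)
  then have cS: "compact S" unfolding S_def K_def using compact_K by auto
  have neS: "S \<noteq> {}" using x1 unfolding S_def M_def by auto
  define L where "L = (\<Sum>j<d. n j)"
  define G where "G = (\<lambda>(y::nat\<Rightarrow>nat\<Rightarrow>real) \<beta>. \<Sum>k<L. (\<Sum>a\<in>\<beta>. y a k)^2)"
  define Phi where "Phi = (\<lambda>y. \<Sum>\<beta>\<in>P. G y \<beta>)"
  have cPhi: "continuous_on S Phi"
    unfolding Phi_def G_def by (intro continuous_intros cont_coord)
  obtain x where xS: "x \<in> S" and xmax: "\<forall>y\<in>S. Phi y \<le> Phi x"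
    using continuous_attains_sup[OF cS neS cPhi] by blast
  have xK: "x \<in> K" and xM: "\<bar>F x\<bar> = M" using xS unfolding S_def by auto
  have maxM: "\<forall>y\<in>K. \<bar>F y\<bar> \<le> M" using x1 unfolding M_def by auto
  have eq: "x p = x q" if \<alpha>: "\<alpha> \<in> P" "p \<in> \<alpha>" "q \<in> \<alpha>" for \<alpha> p q
  proof (rule ccontr)
    assume neq: "x p \<noteq> x q"
    then have pq: "p \<noteq> q" by auto
    have pd: "p < d" "q < d" using Psub \<alpha> by auto
    have symA: "sym_wrt d n T \<alpha>" using symP \<alpha> by auto
    have nA: "\<forall>a\<in>\<alpha>. n a = n p" using symA \<alpha> unfolding sym_wrt_def by blast
    have npq: "n p = n q" using nA \<alpha> by metis
    have symT: "\<forall>i\<in>idx d n. T (swp p q i) = T i"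
      using symA \<alpha> unfolding sym_wrt_def swp_def by blast
    define R where "R = (\<lambda>k. \<Sum>a\<in>\<alpha>-{p,q}. x a k)"
    obtain z where z1: "x(p:=z,q:=z) \<in> K" and z2: "\<bar>F (x(p:=z,q:=z))\<bar> = M"
      and z3: "(\<Sum>k<n p. (x p k + x q k + R k)^2) < (\<Sum>k<n p. (2 * z k + R k)^2)"
      using move[OF xK[unfolded K_def] pd pq npq symT maxM[unfolded K_def F_def] xM[unfolded F_def] neq, of R]
      unfolding K_def F_def by blast
    define x' where "x' = x(p:=z,q:=z)"
    have x'S: "x' \<in> S" using z1 z2 unfolding S_def x'_def by blast
    have finA: "finite \<alpha>" using Psub[OF \<alpha>(1)] finite_subset by blast
    have npL: "n p \<le> L" unfolding L_def using pd by (intro member_le_sum) auto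
    have z1K: "\<forall>j k. (d \<le> j \<or> n j \<le> k) \<longrightarrow> (x(p:=z,q:=z)) j k = 0"
      using z1 unfolding K_def Kset_def by blast
    have zz: "z k = 0" if "n p \<le> k" for k
    proof -
      have "(x(p:=z,q:=z)) p k = 0" using z1K that by blast
      then show ?thesis by (cases "p = q") auto
    qed
    have xK0: "\<forall>j k. (d \<le> j \<or> n j \<le> k) \<longrightarrow> x j k = 0"
      using xK unfolding K_def Kset_def by blast
    have xz: "x a k = 0" if "a \<in> \<alpha>" "n p \<le> k" for a k
    proof -
      have "n a = n p" using nA that(1) by blast
      then show ?thesis using xK0 that(2) by simp
    qed
    have Rz: "R k = 0" if "n p \<le> k" for k
      unfolding R_def using xz that by (intro sum.neutral) auto
    have Gx: "G x \<alpha> = (\<Sum>k<n p. (x p k + x q k + R k)^2)"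
    proof -
      have "G x \<alpha> = (\<Sum>k<L. (x p k + x q k + R k)^2)"
        unfolding G_def R_def using sum_split2[OF finA \<alpha>(2,3) pq] by simp
      also have "\<dots> = (\<Sum>k<n p. (x p k + x q k + R k)^2)"
        by (rule sum.mono_neutral_right) (use npL xz Rz \<alpha> in auto)
      finally show ?thesis .
    qed
    have Gx': "G x' \<alpha> = (\<Sum>k<n p. (2 * z k + R k)^2)"
    proof -
      have "(\<Sum>a\<in>\<alpha>. x' a k) = 2 * z k + R k" for k
      proof -
        have "(\<Sum>a\<in>\<alpha>-{p,q}. x' a k) = R k" unfolding R_def x'_def by (intro sum.cong) auto
        then show ?thesis using sum_split2[OF finA \<alpha>(2,3) pq, of "\<lambda>a. x' a k"] unfolding x'_def by simp
      qed
      then have "G x' \<alpha> = (\<Sum>k<L. (2 * z k + R k)^2)" unfolding G_def by simp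
      also have "\<dots> = (\<Sum>k<n p. (2 * z k + R k)^2)"
        by (rule sum.mono_neutral_right) (use npL zz Rz in auto)
      finally show ?thesis .
    qed
    have Gother: "G x' \<beta> = G x \<beta>" if "\<beta> \<in> P - {\<alpha>}" for \<beta>
    proof -
      have "p \<notin> \<beta>" "q \<notin> \<beta>" using disj[of \<alpha> \<beta>] that \<alpha> by auto
      then have "(\<Sum>a\<in>\<beta>. x' a k) = (\<Sum>a\<in>\<beta>. x a k)" for k
        unfolding x'_def by (intro sum.cong) auto
      then show ?thesis unfolding G_def by simp
    qed
    have "Phi x = G x \<alpha> + (\<Sum>\<beta>\<in>P-{\<alpha>}. G x \<beta>)" unfolding Phi_def using finP \<alpha>(1) by (simp add: sum.remove)
    moreover have "Phi x' = G x' \<alpha> + (\<Sum>\<beta>\<in>P-{\<alpha>}. G x \<beta>)"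
      unfolding Phi_def using finP \<alpha>(1) Gother by (simp add: sum.remove)
    ultimately have "Phi x < Phi x'" using Gx Gx' z3 by simp
    then show False using xmax x'S by force
  qed
  define A where "A = rank_one d (F x) x"
  have "best_rank_one_approx d n T A"
    unfolding A_def F_def
    by (rule best) (use xK maxM xM in \<open>auto simp: K_def F_def\<close>)
  moreover have "sym_wrt d n A \<alpha>" if "\<alpha> \<in> P" for \<alpha>
    unfolding A_def
  proof (rule sym_rank1[OF Psub[OF that]])
    show "\<forall>p\<in>\<alpha>. \<forall>q\<in>\<alpha>. n p = n q" using symP that unfolding sym_wrt_def by blast
    show "\<forall>p\<in>\<alpha>. \<forall>q\<in>\<alpha>. x p = x q" using eq that by blast
  qed
  ultimately show ?thesis by blast
qed


end
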